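(* Let $M'\subset\bigoplus_{i=1}^rS[-\delta_i]$ be a graded $S$-submodule which is generated by $\bigoplus_{d\ge0}M'(d)_d$, where $M'(d)=M'\cap\bigoplus_iS(\delta_i,d)[-\delta_i]$. Then there exists a unique graded right $A$-submodule $M\subset\bigoplus_iA[-\delta_i]$ such that $M'=L(M)$.
   Context: Let $\mathbb K$ be a field, $F=\mathbb K\langle x_1,\dots,x_n\rangle$ with standard grading, $I\subset F$ a graded two-sided ideal, $A=F/I$, $A[-\delta]_d=A_{d-\delta}$, $\bigoplus_{i=1}^rA[-\delta_i]$ the graded free right $A$-module with basis $e_i$ of degree $\delta_i$. Let $P=\mathbb K[x_{ij}\mid1\le i\le n,j\ge1]$ (commutative, $\deg x_{ij}=1$), $Q$ the ideal generated by all $x_{ij}x_{kj}$, $R=P/Q$, $\sigma:x_{ij}\mapsto x_{i,j+1}$, $\iota:F\to R$ the $\mathbb K$-linear map $x_{i_1}\cdots x_{i_d}\mapsto x_{i_11}\cdots x_{i_dd}$, $J$ the ideal of $R$ generated by $\bigcup_{k\ge0}\sigma^k(\iota(I))$, $S=R/J$ (with induced $\sigma$ and induced injective graded linear $\iota:A\to S$). $S(\delta,d)$ is the subalgebra of $S$ generated by the cosets of $x_{ij}$ with $\delta<j\le d$; $\bigoplus_iS(\delta_i,d)[-\delta_i]$ means the elements $\sum_ie'_ih_i$ with $h_i\in S(\delta_i,d)$. $\bigoplus_iS[-\delta_i]$ is the graded free $S$-module with basis $e'_i$ of degree $\delta_i$, and $\iota:\bigoplus_iA[-\delta_i]\to\bigoplus_iS[-\delta_i]$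 is $e_if\mapsto e'_i\sigma^{\delta_i}(\iota(f))$. $L(M)$ is the $S$-submodule generated by $\iota(M)$. *)

theory Defs
  imports Main "HOL-Library.Poly_Mapping"
begin

text \<open>Elements of F are finitely supported functions from words (lists of letter
indices; letter i stands for x_{i+1}) to the field.\<close>

type_synonym 'k ncpoly = "nat list \<Rightarrow>\<^sub>0 'k"

definition ncF :: "nat \<Rightarrow> 'k::field ncpoly set" where
  "ncF n = {f. \<forall>w\<in>Poly_Mapping.keys f. set w \<subseteq> {..<n}}"

definition ncmul :: "'k::field ncpoly \<Rightarrow> 'k ncpoly \<Rightarrow> 'k ncpoly" where
  "ncmul f g = (\<Sum>u\<in>Poly_Mapping.keys f. \<Sum>v\<in>Poly_Mapping.keys g. Poly_Mapping.single (u @ v) (Poly_Mapping.lookup f u * Poly_Mapping.lookup g v))"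

definition hcF :: "nat \<Rightarrow> 'k::field ncpoly \<Rightarrow> 'k ncpoly" where
  "hcF d f = (\<Sum>w\<in>{w\<in>Poly_Mapping.keys f. length w = d}. Poly_Mapping.single w (Poly_Mapping.lookup f w))"

definition graded_tsideal :: "nat \<Rightarrow> 'k::field ncpoly set \<Rightarrow> bool" where
  "graded_tsideal n I \<longleftrightarrow> I \<subseteq> ncF n \<and> 0 \<in> I \<and>
     (\<forall>f\<in>I. \<forall>g\<in>I. f + g \<in> I) \<and>
     (\<forall>f\<in>I. \<forall>a\<in>ncF n. \<forall>b\<in>ncF n. ncmul a (ncmul f b) \<in> I) \<and>
     (\<forall>f\<in>I. \<forall>d. hcF d f \<in> I)"

text \<open>A graded right A-submodule of
(+)_{i<r} A[-delta_i] is encoded by its preimage in (+)_{i<r} F[-delta_i], i.e.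
a graded right F-submodule containing (+)_i e_i I.\<close>

definition ncfree :: "nat \<Rightarrow> nat \<Rightarrow> (nat \<Rightarrow> 'k::field ncpoly) set" where
  "ncfree n r = {x. (\<forall>i<r. x i \<in> ncF n) \<and> (\<forall>i\<ge>r. x i = 0)}"

definition Ifree :: "nat \<Rightarrow> 'k::field ncpoly set \<Rightarrow> (nat \<Rightarrow> 'k ncpoly) set" where
  "Ifree r I = {x. (\<forall>i<r. x i \<in> I) \<and> (\<forall>i\<ge>r. x i = 0)}"

text \<open>degree-d homogeneous component in (+)_i F[-delta_i] (e_i has degree delta_i)\<close>
definition hcFM :: "(nat \<Rightarrow> nat) \<Rightarrow> nat \<Rightarrow> (nat \<Rightarrow> 'k::field ncpoly) \<Rightarrow> nat \<Rightarrow> 'k ncpoly" where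
  "hcFM \<delta> d x = (\<lambda>i. if \<delta> i \<le> d then hcF (d - \<delta> i) (x i) else 0)"

definition graded_right_submodule ::
  "nat \<Rightarrow> 'k::field ncpoly set \<Rightarrow> nat \<Rightarrow> (nat \<Rightarrow> nat) \<Rightarrow> (nat \<Rightarrow> 'k ncpoly) set \<Rightarrow> bool" where
  "graded_right_submodule n I r \<delta> M \<longleftrightarrow>
     M \<subseteq> ncfree n r \<and> Ifree r I \<subseteq> M \<and>
     (\<forall>x\<in>M. \<forall>y\<in>M. (\<lambda>i. x i + y i) \<in> M) \<and>
     (\<forall>x\<in>M. \<forall>g\<in>ncF n. (\<lambda>i. ncmul (x i) g) \<in> M) \<and>
     (\<forall>x\<in>M. \<forall>d. hcFM \<delta> d x \<in> M)"

type_synonym pmon = "(nat \<times> nat) \<Rightarrow>\<^sub>0 nat"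
type_synonym 'k cpoly = "pmon \<Rightarrow>\<^sub>0 'k"

text \<open>variable (i,j) stands for x_{i+1,j}; columns j >= 1 as in the paper\<close>
definition cvars :: "nat \<Rightarrow> (nat \<times> nat) set" where
  "cvars n = {(i, j). i < n \<and> 1 \<le> j}"

definition Pc :: "nat \<Rightarrow> 'k::field cpoly set" where
  "Pc n = {p. \<forall>m\<in>Poly_Mapping.keys p. Poly_Mapping.keys m \<subseteq> cvars n}"

definition var :: "nat \<Rightarrow> nat \<Rightarrow> 'k::field cpoly" where
  "var i j = Poly_Mapping.single (Poly_Mapping.single (i, j) 1) 1"

definition mdeg :: "pmon \<Rightarrow> nat" where
  "mdeg m = (\<Sum>v\<in>Poly_Mapping.keys m. Poly_Mapping.lookup m v)"

definition hcP :: "nat \<Rightarrow> 'k::field cpoly \<Rightarrow> 'k cpoly" where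
  "hcP d p = (\<Sum>m\<in>{m\<in>Poly_Mapping.keys p. mdeg m = d}. Poly_Mapping.single m (Poly_Mapping.lookup p m))"

definition sigma_m :: "pmon \<Rightarrow> pmon" where
  "sigma_m m = (\<Sum>v\<in>Poly_Mapping.keys m. Poly_Mapping.single (fst v, snd v + 1) (Poly_Mapping.lookup m v))"

definition sigma :: "'k::field cpoly \<Rightarrow> 'k cpoly" where
  "sigma p = (\<Sum>m\<in>Poly_Mapping.keys p. Poly_Mapping.single (sigma_m m) (Poly_Mapping.lookup p m))"

definition iota_m :: "nat list \<Rightarrow> pmon" where
  "iota_m w = (\<Sum>k<length w. Poly_Mapping.single (w ! k, k + 1) 1)"

definition iota :: "'k::field ncpoly \<Rightarrow> 'k cpoly" where
  "iota f = (\<Sum>w\<in>Poly_Mapping.keys f. Poly_Mapping.single (iota_m w) (Poly_Mapping.lookup f w))"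

inductive_set cideal :: "nat \<Rightarrow> 'k::field cpoly set \<Rightarrow> 'k cpoly set"
  for n :: nat and G :: "'k cpoly set" where
  cideal_zero: "0 \<in> cideal n G"
| cideal_gen: "g \<in> G \<Longrightarrow> g \<in> cideal n G"
| cideal_add: "a \<in> cideal n G \<Longrightarrow> b \<in> cideal n G \<Longrightarrow> a + b \<in> cideal n G"
| cideal_mul: "p \<in> Pc n \<Longrightarrow> a \<in> cideal n G \<Longrightarrow> p * a \<in> cideal n G"

text \<open>Q is generated by the x_ij x_kj; J is the ideal of R = P/Q generated by the
sigma^k(iota(I)).  Its preimage JP in P is the ideal of P generated by both sets,
and S = R/J = P/JP.\<close>
definition JP :: "nat \<Rightarrow> 'k::field ncpoly set \<Rightarrow> 'k cpoly set" where
  "JP n I = cideal n ({var i j * var k j | i k j. i < n \<and> k < n \<and> 1 \<le> j}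
                     \<union> (\<Union>k. (sigma ^^ k) ` iota ` I))"

text \<open>preimage in P of S(delta,d): polynomials in the x_ij, delta<j<=d, plus JP\<close>
definition Pdd :: "nat \<Rightarrow> nat \<Rightarrow> nat \<Rightarrow> 'k::field cpoly set" where
  "Pdd n \<delta> d = {p \<in> Pc n. \<forall>m\<in>Poly_Mapping.keys p. \<forall>v\<in>Poly_Mapping.keys m. \<delta> < snd v \<and> snd v \<le> d}"

definition Spre :: "nat \<Rightarrow> 'k::field ncpoly set \<Rightarrow> nat \<Rightarrow> nat \<Rightarrow> 'k cpoly set" where
  "Spre n I \<delta> d = {p + q | p q. p \<in> Pdd n \<delta> d \<and> q \<in> JP n I}"

section \<open>Free graded S-modules, encoded by preimages in (+)_{i<r} P[-delta_i]\<close>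

definition cfree :: "nat \<Rightarrow> nat \<Rightarrow> (nat \<Rightarrow> 'k::field cpoly) set" where
  "cfree n r = {x. (\<forall>i<r. x i \<in> Pc n) \<and> (\<forall>i\<ge>r. x i = 0)}"

definition Jfree :: "nat \<Rightarrow> 'k::field ncpoly set \<Rightarrow> nat \<Rightarrow> (nat \<Rightarrow> 'k cpoly) set" where
  "Jfree n I r = {x. (\<forall>i<r. x i \<in> JP n I) \<and> (\<forall>i\<ge>r. x i = 0)}"

definition hcPM :: "(nat \<Rightarrow> nat) \<Rightarrow> nat \<Rightarrow> (nat \<Rightarrow> 'k::field cpoly) \<Rightarrow> nat \<Rightarrow> 'k cpoly" where
  "hcPM \<delta> d x = (\<lambda>i. if \<delta> i \<le> d then hcP (d - \<delta> i) (x i) else 0)"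

inductive_set cspan :: "nat \<Rightarrow> (nat \<Rightarrow> 'k::field cpoly) set \<Rightarrow> (nat \<Rightarrow> 'k cpoly) set"
  for n :: nat and G :: "(nat \<Rightarrow> 'k cpoly) set" where
  cspan_zero: "(\<lambda>i. 0) \<in> cspan n G"
| cspan_gen: "x \<in> G \<Longrightarrow> x \<in> cspan n G"
| cspan_add: "x \<in> cspan n G \<Longrightarrow> y \<in> cspan n G \<Longrightarrow> (\<lambda>i. x i + y i) \<in> cspan n G"
| cspan_mul: "p \<in> Pc n \<Longrightarrow> x \<in> cspan n G \<Longrightarrow> (\<lambda>i. p * x i) \<in> cspan n G"

definition graded_S_submodule ::
  "nat \<Rightarrow> 'k::field ncpoly set \<Rightarrow> nat \<Rightarrow> (nat \<Rightarrow> nat) \<Rightarrow> (nat \<Rightarrow> 'k cpoly) set \<Rightarrow> bool" where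
  "graded_S_submodule n I r \<delta> M' \<longleftrightarrow>
     M' \<subseteq> cfree n r \<and> Jfree n I r \<subseteq> M' \<and>
     (\<forall>x\<in>M'. \<forall>y\<in>M'. (\<lambda>i. x i + y i) \<in> M') \<and>
     (\<forall>x\<in>M'. \<forall>p\<in>Pc n. (\<lambda>i. p * x i) \<in> M') \<and>
     (\<forall>x\<in>M'. \<forall>d. hcPM \<delta> d x \<in> M')"

text \<open>(preimage of) M'(d)_d: elements of M' whose class lies in
(+)_i S(delta_i,d)[-delta_i] and is homogeneous of degree d\<close>
definition Mdd :: "nat \<Rightarrow> 'k::field ncpoly set \<Rightarrow> nat \<Rightarrow> (nat \<Rightarrow> nat) \<Rightarrow>
    (nat \<Rightarrow> 'k cpoly) set \<Rightarrow> nat \<Rightarrow> (nat \<Rightarrow> 'k cpoly) set" where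
  "Mdd n I r \<delta> M' d = {x \<in> M'. (\<forall>i<r. x i \<in> Spre n I (\<delta> i) d) \<and>
                                (\<forall>i<r. x i - hcPM \<delta> d x i \<in> JP n I)}"

definition iotaM :: "(nat \<Rightarrow> nat) \<Rightarrow> (nat \<Rightarrow> 'k::field ncpoly) \<Rightarrow> nat \<Rightarrow> 'k cpoly" where
  "iotaM \<delta> x = (\<lambda>i. (sigma ^^ \<delta> i) (iota (x i)))"

text \<open>(preimage of) L(M): S-submodule generated by iota(M)\<close>
definition Lmod :: "nat \<Rightarrow> 'k::field ncpoly set \<Rightarrow> nat \<Rightarrow> (nat \<Rightarrow> nat) \<Rightarrow>
    (nat \<Rightarrow> 'k ncpoly) set \<Rightarrow> (nat \<Rightarrow> 'k cpoly) set" where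
  "Lmod n I r \<delta> M = cspan n (iotaM \<delta> ` M \<union> Jfree n I r)"

end

theory Submission
  imports Defs
begin


lemma pm_induct [case_names zero add]:
  assumes "P 0"
    and "\<And>q a c. a \<notin> Poly_Mapping.keys q \<Longrightarrow> c \<noteq> 0 \<Longrightarrow> P q \<Longrightarrow> P (Poly_Mapping.single a c + q)"
  shows "P p"
proof (induction p rule: Poly_Mapping.update_induct)
  case const then show ?case using assms(1) by simp
next
  case (update f a b)
  have "Poly_Mapping.update a b f = Poly_Mapping.single a b + f"
    using update.hyps(1)
    by (intro poly_mapping_eqI) (auto simp: Poly_Mapping.lookup_update lookup_add lookup_single when_def in_keys_iff)
  then show ?case using assms(2)[OF update.hyps(1,2) update.IH] by simp
qed

lemma keys_single_add:
  "a \<notin> Poly_Mapping.keys q \<Longrightarrow> c \<noteq> 0 \<Longrightarrow> Poly_Mapping.keys (Poly_Mapping.single a c + q) = insert a (Poly_Mapping.keys q)"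
  by (auto simp: in_keys_iff lookup_add lookup_single when_def split: if_splits)

definition lin :: "('a \<Rightarrow> 'b::monoid_add \<Rightarrow> 'c::comm_monoid_add) \<Rightarrow> ('a \<Rightarrow>\<^sub>0 'b) \<Rightarrow> 'c" where
  "lin G p = (\<Sum>a\<in>Poly_Mapping.keys p. G a (Poly_Mapping.lookup p a))"

lemma lin_add:
  assumes "\<And>a. G a 0 = 0" and "\<And>a x y. G a (x + y) = G a x + G a y"
  shows "lin G (p + q) = lin G p + lin G q"
  unfolding lin_def by (rule setsum_keys_plus_distrib) (use assms in auto)

lemma lin_single:
  assumes "G a 0 = 0" shows "lin G (Poly_Mapping.single a c) = G a c"
  using assms unfolding lin_def by auto

lemma lin_zero [simp]: "lin G 0 = 0"
  unfolding lin_def by simp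

lemma keys_lin_single:
  "Poly_Mapping.keys (lin (\<lambda>x c. Poly_Mapping.single (\<phi> x) (H x c)) p) \<subseteq> \<phi> ` Poly_Mapping.keys p"
  unfolding lin_def using keys_sum[of "\<lambda>x. Poly_Mapping.single (\<phi> x) (H x (Poly_Mapping.lookup p x))" "Poly_Mapping.keys p"]
  by (auto split: if_splits)




lemma lookup_lin_single_id: "lin (\<lambda>w c. Poly_Mapping.single w c) f = f"
proof (induction f rule: pm_induct)
  case zero then show ?case by simp
next
  case (add q a c) then show ?case by (simp add: lin_add single_add lin_single)
qed

lemma hcF_lin: "hcF d f = lin (\<lambda>w c. if length w = d then Poly_Mapping.single w c else 0) f"
  unfolding hcF_def lin_def by (simp add: sum.inter_filter)

lemma hcF_add: "hcF d (f + g) = hcF d f + hcF d g"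
  unfolding hcF_lin by (rule lin_add) (auto simp: single_add)

lemma hcF_single: "hcF d (Poly_Mapping.single w c) = (if length w = d then Poly_Mapping.single w c else 0)"
  unfolding hcF_lin by (rule lin_single) simp

lemma hcF_zero [simp]: "hcF d 0 = 0"
  unfolding hcF_lin by simp

lemma lookup_hcF: "Poly_Mapping.lookup (hcF d f) w = (if length w = d then Poly_Mapping.lookup f w else 0)"
proof (induction f rule: pm_induct)
  case zero then show ?case by simp
next
  case (add q a c) then show ?case by (auto simp: hcF_add hcF_single lookup_add lookup_single when_def)
qed

lemma keys_hcF: "Poly_Mapping.keys (hcF d f) = {w \<in> Poly_Mapping.keys f. length w = d}"
  by (auto simp: in_keys_iff lookup_hcF split: if_splits)

lemma hcP_lin: "hcP d p = lin (\<lambda>m c. if mdeg m = d then Poly_Mapping.single m c else 0) p"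
  unfolding hcP_def lin_def by (simp add: sum.inter_filter)

lemma hcP_add: "hcP d (p + q) = hcP d p + hcP d q"
  unfolding hcP_lin by (rule lin_add) (auto simp: single_add)

lemma hcP_single: "hcP d (Poly_Mapping.single m c) = (if mdeg m = d then Poly_Mapping.single m c else 0)"
  unfolding hcP_lin by (rule lin_single) simp

lemma hcP_zero [simp]: "hcP d 0 = 0"
  unfolding hcP_lin by simp

lemma lookup_hcP: "Poly_Mapping.lookup (hcP d p) m = (if mdeg m = d then Poly_Mapping.lookup p m else 0)"
proof (induction p rule: pm_induct)
  case zero then show ?case by simp
next
  case (add q a c) then show ?case by (auto simp: hcP_add hcP_single lookup_add lookup_single when_def)
qed

lemma keys_hcP: "Poly_Mapping.keys (hcP d p) = {m \<in> Poly_Mapping.keys p. mdeg m = d}"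
  by (auto simp: in_keys_iff lookup_hcP split: if_splits)

lemma hcP_diff: "hcP d (p - q) = hcP d p - hcP d q"
  using hcP_add[of d "p - q" q] by (simp add: algebra_simps)

lemma hcP_uminus: "hcP d (- q) = - hcP d q"
  using hcP_diff[of d 0 q] by simp

lemma mdeg_lin: "mdeg m = lin (\<lambda>v c. c) m"
  unfolding mdeg_def lin_def by simp

lemma mdeg_add: "mdeg (m1 + m2) = mdeg m1 + mdeg m2"
  unfolding mdeg_lin by (rule lin_add) auto

lemma mdeg_single: "mdeg (Poly_Mapping.single v c) = c"
  unfolding mdeg_lin by (rule lin_single) simp

lemma mdeg_zero [simp]: "mdeg 0 = 0"
  unfolding mdeg_lin by simp

lemma mdeg_sum: "mdeg (sum f A) = (\<Sum>a\<in>A. mdeg (f a))"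
  by (induction A rule: infinite_finite_induct) (auto simp: mdeg_add)

lemma sigma_m_lin: "sigma_m m = lin (\<lambda>v c. Poly_Mapping.single (fst v, snd v + 1) c) m"
  unfolding sigma_m_def lin_def by simp

lemma sigma_m_add: "sigma_m (m1 + m2) = sigma_m m1 + sigma_m m2"
  unfolding sigma_m_lin by (rule lin_add) (auto simp: single_add)

lemma sigma_m_single: "sigma_m (Poly_Mapping.single v c) = Poly_Mapping.single (fst v, snd v + 1) c"
  unfolding sigma_m_lin by (rule lin_single) simp

lemma sigma_m_zero [simp]: "sigma_m 0 = 0"
  unfolding sigma_m_lin by simp

lemma sigma_m_sum: "sigma_m (sum f A) = (\<Sum>a\<in>A. sigma_m (f a))"
  by (induction A rule: infinite_finite_induct) (auto simp: sigma_m_add)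

lemma sigma_lin: "sigma p = lin (\<lambda>m c. Poly_Mapping.single (sigma_m m) c) p"
  unfolding sigma_def lin_def by simp

lemma sigma_add: "sigma (p + q) = sigma p + sigma q"
  unfolding sigma_lin by (rule lin_add) (auto simp: single_add)

lemma sigma_single: "sigma (Poly_Mapping.single m c) = Poly_Mapping.single (sigma_m m) c"
  unfolding sigma_lin by (rule lin_single) simp

lemma sigma_zero [simp]: "sigma 0 = 0"
  unfolding sigma_lin by simp

lemma sigma_pow_add: "(sigma ^^ k) (p + q) = (sigma ^^ k) p + (sigma ^^ k) q"
  by (induction k) (auto simp: sigma_add)

lemma sigma_pow_zero [simp]: "(sigma ^^ k) 0 = 0"
  by (induction k) auto

lemma iota_lin: "iota f = lin (\<lambda>w c. Poly_Mapping.single (iota_m w) c) f"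
  unfolding iota_def lin_def by simp

lemma iota_add: "iota (f + g) = iota f + iota g"
  unfolding iota_lin by (rule lin_add) (auto simp: single_add)

lemma iota_single: "iota (Poly_Mapping.single w c) = Poly_Mapping.single (iota_m w) c"
  unfolding iota_lin by (rule lin_single) simp

lemma iota_zero [simp]: "iota 0 = 0"
  unfolding iota_lin by simp

definition sm :: "nat \<Rightarrow> nat list \<Rightarrow> pmon" where
  "sm k w = (\<Sum>j<length w. Poly_Mapping.single (w ! j, k + j + 1) 1)"

lemma iota_m_sm: "iota_m w = sm 0 w"
  unfolding iota_m_def sm_def by simp

lemma sigma_m_sm: "sigma_m (sm k w) = sm (Suc k) w"
  unfolding sm_def by (simp add: sigma_m_sum sigma_m_single)

definition SI :: "nat \<Rightarrow> 'k::field ncpoly \<Rightarrow> 'k cpoly" where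
  "SI k f = lin (\<lambda>w c. Poly_Mapping.single (sm k w) c) f"

lemma SI_add: "SI k (f + g) = SI k f + SI k g"
  unfolding SI_def by (rule lin_add) (auto simp: single_add)

lemma SI_single: "SI k (Poly_Mapping.single w c) = Poly_Mapping.single (sm k w) c"
  unfolding SI_def by (rule lin_single) simp

lemma SI_zero [simp]: "SI k 0 = 0"
  unfolding SI_def by simp

lemma SI_diff: "SI k (f - g) = SI k f - SI k g"
  using SI_add[of k "f - g" g] by (simp add: algebra_simps)

lemma SI_sum: "SI k (sum f A) = (\<Sum>a\<in>A. SI k (f a))"
  by (induction A rule: infinite_finite_induct) (auto simp: SI_add)

lemma sigma_pow_single: "(sigma ^^ k) (Poly_Mapping.single (sm 0 w) c) = Poly_Mapping.single (sm k w) c"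
  by (induction k) (auto simp: sigma_single sigma_m_sm)

lemma sigma_pow_iota: "(sigma ^^ k) (iota f) = SI k f"
proof (induction f rule: pm_induct)
  case zero then show ?case by simp
next
  case (add q a c) then show ?case
    by (simp add: iota_add sigma_pow_add SI_add iota_single iota_m_sm sigma_pow_single SI_single)
qed




lemma lookup_sm: "Poly_Mapping.lookup (sm k w) (a, j) =
   (if k < j \<and> j \<le> k + length w \<and> w ! (j - k - 1) = a then 1 else 0)"
proof -
  have "Poly_Mapping.lookup (sm k w) (a, j) =
     (\<Sum>i\<in>{..<length w}. if i = j - k - 1 then (if k < j \<and> w ! (j - k - 1) = a then 1 else 0) else 0)"
    unfolding sm_def lookup_sum
  proof (rule sum.cong)
    fix i assume "i \<in> {..<length w}"
    show "Poly_Mapping.lookup (Poly_Mapping.single (w ! i, k + i + 1) 1) (a, j) =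
      (if i = j - k - 1 then (if k < j \<and> w ! (j - k - 1) = a then 1 else 0) else 0)"
      unfolding lookup_single when_def by (cases "i = j - k - 1") auto
  qed simp
  also have "\<dots> = (if k < j \<and> j \<le> k + length w \<and> w ! (j - k - 1) = a then 1 else 0)"
    proof (subst sum.delta)
    have "k < j \<Longrightarrow> (j - k - 1 < length w) = (j \<le> k + length w)" by arith
    then show "(if j - k - 1 \<in> {..<length w} then if k < j \<and> w ! (j - k - 1) = a then 1 else 0 else 0) =
      (if k < j \<and> j \<le> k + length w \<and> w ! (j - k - 1) = a then 1 else 0)"
      by (cases "k < j") (simp_all only: lessThan_iff if_False if_True simp_thms, auto)
  qed simp
  finally show ?thesis .
qed

lemma lookup_sm': "Poly_Mapping.lookup (sm k w) v =
   (if k < snd v \<and> snd v \<le> k + length w \<and> w ! (snd v - k - 1) = fst v then 1 else 0)"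
  using lookup_sm[of k w "fst v" "snd v"] by simp

lemma keys_sm: "Poly_Mapping.keys (sm k w) = {(w ! j, k + j + 1) | j. j < length w}"
  by (auto simp: in_keys_iff lookup_sm' split: if_splits)

lemma mdeg_sm: "mdeg (sm k w) = length w"
  unfolding sm_def by (simp add: mdeg_sum mdeg_single)

lemma sm_Nil [simp]: "sm k [] = 0"
  unfolding sm_def by simp

lemma sm_append: "sm k (u @ v) = sm k u + sm (k + length u) v"
proof (rule poly_mapping_eqI)
  fix x :: "nat \<times> nat"
  obtain a j where x: "x = (a, j)" by (cases x)
  show "Poly_Mapping.lookup (sm k (u @ v)) x = Poly_Mapping.lookup (sm k u + sm (k + length u) v) x"
    unfolding x lookup_add lookup_sm by (auto simp: nth_append)
qed

lemma sm_inj: "sm k u = sm k v \<Longrightarrow> u = v"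
proof -
  assume eq: "sm k u = sm k v"
  then have len: "length u = length v" using mdeg_sm by metis
  show "u = v"
  proof (rule nth_equalityI)
    show "length u = length v" by fact
  next
    fix j assume j: "j < length u"
    have "Poly_Mapping.lookup (sm k u) (u ! j, k + j + 1) = 1" using j by (simp add: lookup_sm)
    then have "Poly_Mapping.lookup (sm k v) (u ! j, k + j + 1) = 1" using eq by simp
    then show "u ! j = v ! j" by (simp add: lookup_sm split: if_splits)
  qed
qed

lemma inj_sm: "inj (sm k)"
  by (auto intro: injI sm_inj)

lemma sm_le_core:
  assumes eq: "m + sm k w = sm d u" and j: "j < length w"
  shows "d < k + j + 1 \<and> k + j + 1 \<le> d + length u \<and> u ! (k + j - d) = w ! j"
proof -
  have "Poly_Mapping.lookup (sm d u) (w ! j, k + j + 1) \<ge> 1"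
    using j unfolding eq[symmetric] lookup_add by (simp add: lookup_sm)
  then show ?thesis by (simp add: lookup_sm split: if_splits)
qed

lemma core:
  assumes eq: "m + sm k w = sm d u" and w: "w \<noteq> []"
  shows "d \<le> k \<and> (\<exists>a b. length a = k - d \<and> u = a @ w @ b \<and> m = sm d a + sm (k + length w) b)"
proof -
  have h0: "d \<le> k" using sm_le_core[OF eq, of 0] w by auto
  have h1: "k + length w \<le> d + length u" using sm_le_core[OF eq, of "length w - 1"] w by auto
  define a where "a = take (k - d) u"
  define b where "b = drop (k - d + length w) u"
  have tw: "take (length w) (drop (k - d) u) = w"
  proof (rule nth_equalityI)
    show "length (take (length w) (drop (k - d) u)) = length w" using h0 h1 by simp
  next
    fix j assume "j < length (take (length w) (drop (k - d) u))"
    then have j: "j < length w" by simp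
    show "take (length w) (drop (k - d) u) ! j = w ! j"
      using sm_le_core[OF eq j] j h0 h1 by (simp add: add.commute)
  qed
  have u: "u = a @ w @ b"
  proof -
    have "u = take (k - d) u @ take (length w) (drop (k - d) u) @ drop (length w) (drop (k - d) u)"
      by (simp only: append_take_drop_id)
    then show ?thesis unfolding a_def b_def tw by (simp add: add.commute)
  qed
  have la: "length a = k - d" unfolding a_def using h0 h1 by simp
  have "sm d u = sm d a + sm k w + sm (k + length w) b"
    unfolding u sm_append la using h0 by (simp add: add.assoc)
  then have "m + sm k w = (sm d a + sm (k + length w) b) + sm k w"
    using eq by (simp add: algebra_simps)
  then have "m = sm d a + sm (k + length w) b" by simp
  then show ?thesis using h0 la u by blast
qed

lemma core0:
  assumes eq: "m + sm d w = sm d u"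
  shows "\<exists>b. u = w @ b \<and> m = sm (d + length w) b"
proof (cases "w = []")
  case True then show ?thesis using eq by simp
next
  case False
  from core[OF eq False] show ?thesis by auto
qed




definition piP :: "nat \<Rightarrow> 'k::field cpoly \<Rightarrow> 'k ncpoly" where
  "piP d p = Abs_poly_mapping (\<lambda>u. Poly_Mapping.lookup p (sm d u))"

lemma lookup_piP: "Poly_Mapping.lookup (piP d p) u = Poly_Mapping.lookup p (sm d u)"
proof -
  have "{u. Poly_Mapping.lookup p (sm d u) \<noteq> 0} = sm d -` Poly_Mapping.keys p"
    by (auto simp: in_keys_iff)
  then have "finite {u. Poly_Mapping.lookup p (sm d u) \<noteq> 0}"
    using finite_vimageI[OF finite_keys inj_sm] by simp
  then show ?thesis unfolding piP_def by simp
qed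

lemma piP_add: "piP d (p + q) = piP d p + piP d q"
  by (rule poly_mapping_eqI) (simp add: lookup_piP lookup_add)

lemma piP_zero [simp]: "piP d 0 = 0"
  by (rule poly_mapping_eqI) (simp add: lookup_piP)

lemma piP_diff: "piP d (p - q) = piP d p - piP d q"
  by (rule poly_mapping_eqI) (simp add: lookup_piP lookup_minus)

lemma piP_sum: "piP d (sum f A) = (\<Sum>a\<in>A. piP d (f a))"
  by (induction A rule: infinite_finite_induct) (auto simp: piP_add)

lemma piP_single_sm: "piP d (Poly_Mapping.single (sm d u) c) = Poly_Mapping.single u c"
  by (rule poly_mapping_eqI) (auto simp: lookup_piP lookup_single when_def dest: sm_inj)

lemma piP_single_nsm: "(\<And>u. m \<noteq> sm d u) \<Longrightarrow> piP d (Poly_Mapping.single m c) = 0"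
  by (rule poly_mapping_eqI) (auto simp: lookup_piP lookup_single when_def)

lemma lookup_SI_sm: "Poly_Mapping.lookup (SI d f) (sm d u) = Poly_Mapping.lookup f u"
proof (induction f rule: pm_induct)
  case zero then show ?case by simp
next
  case (add q a c) then show ?case
    by (auto simp: SI_add SI_single lookup_add lookup_single when_def dest: sm_inj)
qed

lemma piP_SI: "piP d (SI d f) = f"
  by (rule poly_mapping_eqI) (simp add: lookup_piP lookup_SI_sm)

lemma keys_SI: "Poly_Mapping.keys (SI k f) \<subseteq> sm k ` Poly_Mapping.keys f"
  unfolding SI_def by (rule keys_lin_single)

lemma keys_sm_cvars: "set w \<subseteq> {..<n} \<Longrightarrow> Poly_Mapping.keys (sm k w) \<subseteq> cvars n"
  by (auto simp: keys_sm cvars_def) (meson lessThan_iff nth_mem subsetD)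

lemma SI_Pc: "f \<in> ncF n \<Longrightarrow> SI k f \<in> Pc n"
  using keys_SI[of k f] keys_sm_cvars unfolding Pc_def ncF_def by blast

lemma piP_Pc: assumes "p \<in> Pc n" shows "piP d p \<in> ncF n"
  unfolding ncF_def
proof (intro CollectI ballI subsetI)
  fix u x assume u: "u \<in> Poly_Mapping.keys (piP d p)" and x: "x \<in> set u"
  then have "sm d u \<in> Poly_Mapping.keys p" by (simp add: in_keys_iff lookup_piP)
  then have ks: "Poly_Mapping.keys (sm d u) \<subseteq> cvars n" using assms unfolding Pc_def by blast
  from x obtain j where j: "j < length u" "u ! j = x" by (auto simp: in_set_conv_nth)
  then have "(x, d + j + 1) \<in> Poly_Mapping.keys (sm d u)" by (auto simp: keys_sm)
  then show "x \<in> {..<n}" using ks by (auto simp: cvars_def)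
qed

lemma keys_add_nat: "Poly_Mapping.keys ((m1::'a \<Rightarrow>\<^sub>0 nat) + m2) = Poly_Mapping.keys m1 \<union> Poly_Mapping.keys m2"
  by (auto simp: in_keys_iff lookup_add)

lemma Pc_mult: "p \<in> Pc n \<Longrightarrow> q \<in> Pc n \<Longrightarrow> p * q \<in> Pc n"
proof -
  assume p: "p \<in> Pc n" and q: "q \<in> Pc n"
  show ?thesis unfolding Pc_def
  proof (intro CollectI ballI)
    fix m assume "m \<in> Poly_Mapping.keys (p * q)"
    then obtain a b where "m = a + b" "a \<in> Poly_Mapping.keys p" "b \<in> Poly_Mapping.keys q"
      using keys_mult[of p q] by blast
    then show "Poly_Mapping.keys m \<subseteq> cvars n" using p q unfolding Pc_def by (auto simp: keys_add_nat)
  qed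
qed

lemma Pc_add: "p \<in> Pc n \<Longrightarrow> q \<in> Pc n \<Longrightarrow> p + q \<in> Pc n"
  unfolding Pc_def using keys_add[of p q] by blast

lemma Pc_one: "1 \<in> Pc n"
  unfolding Pc_def by simp

lemma Pc_single: "Poly_Mapping.keys m \<subseteq> cvars n \<Longrightarrow> Poly_Mapping.single m c \<in> Pc n"
  unfolding Pc_def by simp

lemma Pc_uminus: "p \<in> Pc n \<Longrightarrow> - p \<in> Pc n"
  unfolding Pc_def by simp

lemma Pc_hcP: "p \<in> Pc n \<Longrightarrow> hcP d p \<in> Pc n"
  unfolding Pc_def by (auto simp: keys_hcP)

lemma ncmul_lin: "ncmul f g = lin (\<lambda>u c. lin (\<lambda>v e. Poly_Mapping.single (u @ v) (c * e)) g) f"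
  unfolding ncmul_def lin_def by simp

lemma ncmul_add_left: "ncmul (f1 + f2) g = ncmul f1 g + ncmul f2 g"
  unfolding ncmul_lin
  by (rule lin_add) (auto simp: lin_def single_add distrib_right sum.distrib)

lemma ncmul_add_right: "ncmul f (g1 + g2) = ncmul f g1 + ncmul f g2"
  unfolding ncmul_lin lin_def[of _ f]
  by (simp add: lin_add single_add distrib_left sum.distrib)

lemma ncmul_zero_left [simp]: "ncmul 0 g = 0"
  unfolding ncmul_def by simp

lemma ncmul_zero_right [simp]: "ncmul f 0 = 0"
  unfolding ncmul_def by simp

lemma ncmul_single_single: "ncmul (Poly_Mapping.single u c) (Poly_Mapping.single v e) = Poly_Mapping.single (u @ v) (c * e)"
  unfolding ncmul_lin by (simp add: lin_single)

lemma ncmul_sum_left: "ncmul (sum f A) g = (\<Sum>a\<in>A. ncmul (f a) g)"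
  by (induction A rule: infinite_finite_induct) (auto simp: ncmul_add_left)

lemma ncmul_one_left: "ncmul (Poly_Mapping.single [] 1) g = g"
proof (induction g rule: pm_induct)
  case zero then show ?case by simp
next
  case (add q a c) then show ?case by (simp add: ncmul_add_right ncmul_single_single)
qed

lemma keys_ncmul: "Poly_Mapping.keys (ncmul f g) \<subseteq> {u @ v | u v. u \<in> Poly_Mapping.keys f \<and> v \<in> Poly_Mapping.keys g}"
proof -
  have "Poly_Mapping.keys (ncmul f g) \<subseteq> (\<Union>u\<in>Poly_Mapping.keys f. Poly_Mapping.keys (\<Sum>v\<in>Poly_Mapping.keys g. Poly_Mapping.single (u @ v) (Poly_Mapping.lookup f u * Poly_Mapping.lookup g v)))"
    unfolding ncmul_def by (rule keys_sum)
  also have "\<dots> \<subseteq> (\<Union>u\<in>Poly_Mapping.keys f. \<Union>v\<in>Poly_Mapping.keys g. Poly_Mapping.keys (Poly_Mapping.single (u @ v) (Poly_Mapping.lookup f u * Poly_Mapping.lookup g v)))"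
    by (intro UN_mono order.refl keys_sum)
  also have "\<dots> \<subseteq> {u @ v | u v. u \<in> Poly_Mapping.keys f \<and> v \<in> Poly_Mapping.keys g}"
    by (auto split: if_splits)
  finally show ?thesis .
qed

lemma ncF_ncmul: assumes "f \<in> ncF n" "g \<in> ncF n" shows "ncmul f g \<in> ncF n"
  unfolding ncF_def
proof (intro CollectI ballI)
  fix x assume "x \<in> Poly_Mapping.keys (ncmul f g)"
  then obtain u v where "x = u @ v" "u \<in> Poly_Mapping.keys f" "v \<in> Poly_Mapping.keys g"
    using keys_ncmul[of f g] by blast
  then show "set x \<subseteq> {..<n}" using assms unfolding ncF_def by auto
qed

lemma ncF_add: "f \<in> ncF n \<Longrightarrow> g \<in> ncF n \<Longrightarrow> f + g \<in> ncF n"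
  unfolding ncF_def using keys_add[of f g] by blast

lemma ncF_hcF: "f \<in> ncF n \<Longrightarrow> hcF d f \<in> ncF n"
  unfolding ncF_def by (auto simp: keys_hcF)

lemma ncF_single: "set w \<subseteq> {..<n} \<Longrightarrow> Poly_Mapping.single w c \<in> ncF n"
  unfolding ncF_def by simp




lemma SI_ncmul_single: "SI d (ncmul (Poly_Mapping.single a c) g) = Poly_Mapping.single (sm d a) c * SI (d + length a) g"
proof (induction g rule: pm_induct)
  case zero then show ?case by simp
next
  case (add q b e) then show ?case
    by (simp add: ncmul_add_right SI_add distrib_left ncmul_single_single SI_single mult_single sm_append)
qed

lemma SI_ncmul_hom: "(\<forall>w\<in>Poly_Mapping.keys y. length w = L) \<Longrightarrow> SI d (ncmul y g) = SI d y * SI (d + L) g"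
proof (induction y rule: pm_induct)
  case zero then show ?case by simp
next
  case (add q a c)
  then have "length a = L" "\<forall>w\<in>Poly_Mapping.keys q. length w = L" by (auto simp: keys_single_add)
  with add show ?case
    by (simp add: ncmul_add_left SI_add distrib_right SI_ncmul_single SI_single)
qed

lemma piP_mult_single: "piP d (q * Poly_Mapping.single (sm d a) c) = ncmul (Poly_Mapping.single a c) (piP (d + length a) q)"
proof (induction q rule: pm_induct)
  case zero then show ?case by simp
next
  case (add q m e)
  have "piP d (Poly_Mapping.single m e * Poly_Mapping.single (sm d a) c) =
        ncmul (Poly_Mapping.single a c) (piP (d + length a) (Poly_Mapping.single m e))"
  proof (cases "\<exists>b. m = sm (d + length a) b")
    case True
    then obtain b where b: "m = sm (d + length a) b" by blast
    have e: "m + sm d a = sm d (a @ b)" by (simp add: b sm_append add.commute)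
    show ?thesis unfolding mult_single e piP_single_sm by (simp add: b piP_single_sm ncmul_single_single mult.commute)
  next
    case False
    have "\<And>u. m + sm d a \<noteq> sm d u" using core0 False by blast
    then show ?thesis using False by (simp add: mult_single piP_single_nsm)
  qed
  with add show ?case by (simp add: distrib_right piP_add ncmul_add_right)
qed

lemma piP_mult_SI_hom: "(\<forall>w\<in>Poly_Mapping.keys y. length w + d = s) \<Longrightarrow> piP d (q * SI d y) = ncmul y (piP s q)"
proof (induction y rule: pm_induct)
  case zero then show ?case by simp
next
  case (add y a c)
  then have "length a + d = s" "\<forall>w\<in>Poly_Mapping.keys y. length w + d = s" by (auto simp: keys_single_add)
  with add show ?case
    by (simp add: ncmul_add_left SI_add distrib_left piP_add SI_single piP_mult_single add.commute)
qed

lemma hcP_mult_single_single: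
  "hcP d (Poly_Mapping.single m1 c1 * Poly_Mapping.single m2 c2) =
     (\<Sum>e\<in>{..d}. hcP e (Poly_Mapping.single m1 c1) * hcP (d - e) (Poly_Mapping.single m2 c2))"
proof -
  have "(\<Sum>e\<in>{..d}. hcP e (Poly_Mapping.single m1 c1) * hcP (d - e) (Poly_Mapping.single m2 c2)) =
        (\<Sum>e\<in>{..d}. if e = mdeg m1 then (if mdeg m2 = d - mdeg m1 then Poly_Mapping.single (m1 + m2) (c1 * c2) else 0) else 0)"
    by (rule sum.cong) (auto simp: hcP_single mult_single)
  also have "\<dots> = (if mdeg m1 \<le> d \<and> mdeg m2 = d - mdeg m1 then Poly_Mapping.single (m1 + m2) (c1 * c2) else 0)"
    by (subst sum.delta) auto
  also have "\<dots> = hcP d (Poly_Mapping.single m1 c1 * Poly_Mapping.single m2 c2)"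
    by (auto simp: mult_single hcP_single mdeg_add)
  finally show ?thesis by simp
qed

lemma hcP_mult: "hcP d (p * q) = (\<Sum>e\<in>{..d}. hcP e p * hcP (d - e) q)"
proof (induction p rule: pm_induct)
  case zero then show ?case by simp
next
  case (add p m1 c1)
  have "hcP d (Poly_Mapping.single m1 c1 * q) = (\<Sum>e\<in>{..d}. hcP e (Poly_Mapping.single m1 c1) * hcP (d - e) q)"
  proof (induction q rule: pm_induct)
    case zero then show ?case by simp
  next
    case (add q m2 c2)
    then show ?case by (simp add: distrib_left hcP_add hcP_mult_single_single sum.distrib)
  qed
  with add show ?case by (simp add: distrib_right hcP_add sum.distrib)
qed

lemma hcP_SI: "hcP e (SI k f) = SI k (hcF e f)"
proof (induction f rule: pm_induct)
  case zero then show ?case by simp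
next
  case (add f w c) then show ?case
    by (simp add: SI_add hcP_add hcF_add SI_single hcP_single hcF_single mdeg_sm)
qed

lemma lookup_hcF_sum:
  assumes "\<forall>w\<in>Poly_Mapping.keys f. length w \<le> N"
  shows "(\<Sum>e\<in>{..N}. hcF e f) = f"
proof (rule poly_mapping_eqI)
  fix w
  have "Poly_Mapping.lookup (\<Sum>e\<in>{..N}. hcF e f) w = (\<Sum>e\<in>{..N}. if e = length w then Poly_Mapping.lookup f w else 0)"
    unfolding lookup_sum by (rule sum.cong) (auto simp: lookup_hcF)
  also have "\<dots> = Poly_Mapping.lookup f w"
    using assms by (subst sum.delta) (auto simp: in_keys_iff)
  finally show "Poly_Mapping.lookup (\<Sum>e\<in>{..N}. hcF e f) w = Poly_Mapping.lookup f w" .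
qed




lemma cideal_sum: "(\<And>a. a \<in> A \<Longrightarrow> f a \<in> cideal n G) \<Longrightarrow> sum f A \<in> cideal n G"
  by (induction A rule: infinite_finite_induct) (auto intro: cideal.intros)

lemma cideal_uminus: "a \<in> cideal n G \<Longrightarrow> - a \<in> cideal n G"
  using cideal_mul[OF Pc_uminus[OF Pc_one], of a n G] by simp

lemma cideal_diff: "a \<in> cideal n G \<Longrightarrow> b \<in> cideal n G \<Longrightarrow> a - b \<in> cideal n G"
  using cideal_add[OF _ cideal_uminus] by (metis diff_conv_add_uminus)

lemma JP_SI: assumes "f \<in> I" shows "SI k f \<in> JP n I"
proof -
  have "(sigma ^^ k) (iota f) \<in> JP n I" unfolding JP_def by (rule cideal_gen) (use assms in blast)
  then show ?thesis by (simp add: sigma_pow_iota)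
qed

lemma JP_vv: "i < n \<Longrightarrow> k < n \<Longrightarrow> 1 \<le> j \<Longrightarrow> var i j * var k j \<in> JP n I"
  unfolding JP_def by (rule cideal_gen) blast

lemma JP_zero: "0 \<in> JP n I"
  unfolding JP_def by (rule cideal_zero)

lemma JP_add: "a \<in> JP n I \<Longrightarrow> b \<in> JP n I \<Longrightarrow> a + b \<in> JP n I"
  unfolding JP_def by (rule cideal_add)

lemma JP_mul: "p \<in> Pc n \<Longrightarrow> a \<in> JP n I \<Longrightarrow> p * a \<in> JP n I"
  unfolding JP_def by (rule cideal_mul)

lemma JP_diff: "a \<in> JP n I \<Longrightarrow> b \<in> JP n I \<Longrightarrow> a - b \<in> JP n I"
  unfolding JP_def by (rule cideal_diff)

lemma JP_uminus: "a \<in> JP n I \<Longrightarrow> - a \<in> JP n I"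
  unfolding JP_def by (rule cideal_uminus)

lemma JP_sum: "(\<And>a. a \<in> A \<Longrightarrow> f a \<in> JP n I) \<Longrightarrow> sum f A \<in> JP n I"
  unfolding JP_def by (rule cideal_sum)

lemma var_mult: "var i j * var k j = Poly_Mapping.single (Poly_Mapping.single (i, j) 1 + Poly_Mapping.single (k, j) 1) 1"
  unfolding var_def by (simp add: mult_single)

lemma JP_hcP:
  assumes gI: "graded_tsideal n I" and a: "a \<in> JP n I"
  shows "hcP d a \<in> JP n I"
proof -
  define G where "G = ({var i j * var k j | i k j. i < n \<and> k < n \<and> 1 \<le> j} \<union> (\<Union>k. (sigma ^^ k) ` iota ` I))
"
  have "a \<in> cideal n G" using a unfolding JP_def G_def .
  then have "\<forall>d. hcP d a \<in> cideal n G"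
  proof (induction rule: cideal.induct)
    case cideal_zero then show ?case by (auto intro: cideal.intros)
  next
    case (cideal_gen g)
    show ?case
    proof
      fix d
      from cideal_gen consider (vv) i k j where "g = var i j * var k j" "i < n" "k < n" "1 \<le> j"
        | (si) k f where "g = (sigma ^^ k) (iota f)" "f \<in> I"
        unfolding G_def by blast
      then show "hcP d g \<in> cideal n G"
      proof cases
        case vv
        have g0: "g \<in> cideal n G" using cideal_gen.hyps by (rule cideal.cideal_gen)
        have "hcP d g = g \<or> hcP d g = 0" using vv(1) by (simp add: var_mult hcP_single)
        then show ?thesis using g0 by (auto intro: cideal.cideal_zero)
      next
        case si
        have "hcF d f \<in> I" using gI si(2) unfolding graded_tsideal_def by blast
        then have "(sigma ^^ k) (iota (hcF d f)) \<in> G" unfolding G_def by blast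
        then show ?thesis using si by (simp add: sigma_pow_iota hcP_SI cideal.cideal_gen)
      qed
    qed
  next
    case (cideal_add a b) then show ?case by (simp add: hcP_add cideal.cideal_add)
  next
    case (cideal_mul p a)
    show ?case
    proof
      fix d
      show "hcP d (p * a) \<in> cideal n G" unfolding hcP_mult
        by (rule cideal_sum) (use cideal_mul in \<open>auto intro!: cideal.cideal_mul Pc_hcP\<close>)
    qed
  qed
  then show ?thesis unfolding JP_def G_def by blast
qed




context
  fixes n :: nat and I :: "'k::field ncpoly set"
  assumes gI: "graded_tsideal n I"
begin

lemma I_zero: "0 \<in> I" using gI unfolding graded_tsideal_def by blast
lemma I_add: "f \<in> I \<Longrightarrow> g \<in> I \<Longrightarrow> f + g \<in> I" using gI unfolding graded_tsideal_def by blast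
lemma I_ncF: "f \<in> I \<Longrightarrow> f \<in> ncF n" using gI unfolding graded_tsideal_def by blast
lemma I_ideal: "f \<in> I \<Longrightarrow> a \<in> ncF n \<Longrightarrow> b \<in> ncF n \<Longrightarrow> ncmul a (ncmul f b) \<in> I"
  using gI unfolding graded_tsideal_def by blast
lemma I_hcF: "f \<in> I \<Longrightarrow> hcF d f \<in> I" using gI unfolding graded_tsideal_def by blast
lemma I_sum: "(\<And>a. a \<in> A \<Longrightarrow> h a \<in> I) \<Longrightarrow> sum h A \<in> I"
  by (induction A rule: infinite_finite_induct) (auto intro: I_zero I_add)

lemma sm_cvars_set: "Poly_Mapping.keys (sm k w) \<subseteq> cvars n \<Longrightarrow> set w \<subseteq> {..<n}"
proof
  fix x assume ks: "Poly_Mapping.keys (sm k w) \<subseteq> cvars n" and x: "x \<in> set w"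
  from x obtain j where j: "j < length w" "w ! j = x" by (auto simp: in_set_conv_nth)
  then have "(x, k + j + 1) \<in> Poly_Mapping.keys (sm k w)" by (auto simp: keys_sm)
  then show "x \<in> {..<n}" using ks by (auto simp: cvars_def)
qed

lemma U1h_pos:
  assumes f: "f \<in> I" and hom: "\<forall>w\<in>Poly_Mapping.keys f. length w = L" and L: "L > 0"
  shows "q \<in> Pc n \<Longrightarrow> piP d (q * SI k f) \<in> I"
proof (induction q rule: pm_induct)
  case zero then show ?case by (simp add: I_zero)
next
  case (add q m c)
  have keys: "Poly_Mapping.keys (Poly_Mapping.single m c + q) = insert m (Poly_Mapping.keys q)"
    using add by (simp add: keys_single_add)
  then have qP: "q \<in> Pc n" and mP: "Poly_Mapping.keys m \<subseteq> cvars n" using add.prems unfolding Pc_def by auto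
  have single: "piP d (Poly_Mapping.single m c * SI k f) \<in> I"
  proof (cases "\<exists>a b. d \<le> k \<and> length a = k - d \<and> m = sm d a + sm (k + L) b")
    case True
    then obtain a b where ab: "d \<le> k" "length a = k - d" "m = sm d a + sm (k + L) b" by blast
    have sa: "set a \<subseteq> {..<n}" and sb: "set b \<subseteq> {..<n}"
      using mP ab(3) by (auto simp: keys_add_nat intro!: sm_cvars_set)
    have s: "Poly_Mapping.single m c = Poly_Mapping.single (sm d a) 1 * Poly_Mapping.single (sm (k + L) b) c"
      by (simp add: ab(3) mult_single)
    have "Poly_Mapping.single m c * SI k f = SI k f * SI (k + L) (Poly_Mapping.single b c) * SI d (Poly_Mapping.single a 1)"
      unfolding s by (simp add: SI_single ac_simps)
    also have "\<dots> = SI k (ncmul f (Poly_Mapping.single b c)) * SI d (Poly_Mapping.single a 1)"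
      using SI_ncmul_hom[OF hom, of k "Poly_Mapping.single b c"] by simp
    finally have eq: "piP d (Poly_Mapping.single m c * SI k f) = ncmul (Poly_Mapping.single a 1) (ncmul f (Poly_Mapping.single b c))"
      using piP_mult_SI_hom[of "Poly_Mapping.single a 1" d k "SI k (ncmul f (Poly_Mapping.single b c))"] ab
      by (simp add: piP_SI)
    show ?thesis unfolding eq by (rule I_ideal[OF f]) (use sa sb in \<open>auto intro: ncF_single\<close>)
  next
    case False
    have "piP d (Poly_Mapping.single m c * SI k f) = 0"
    proof (rule poly_mapping_eqI)
      fix u
      show "Poly_Mapping.lookup (piP d (Poly_Mapping.single m c * SI k f)) u = Poly_Mapping.lookup 0 u"
      proof (rule ccontr)
        assume "Poly_Mapping.lookup (piP d (Poly_Mapping.single m c * SI k f)) u \<noteq> Poly_Mapping.lookup 0 u"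
        then have "sm d u \<in> Poly_Mapping.keys (Poly_Mapping.single m c * SI k f)"
          by (simp add: lookup_piP in_keys_iff)
        then obtain x y where xy: "sm d u = x + y" "x \<in> Poly_Mapping.keys (Poly_Mapping.single m c)"
            "y \<in> Poly_Mapping.keys (SI k f)"
          using keys_mult by blast
        then obtain w where w: "y = sm k w" "w \<in> Poly_Mapping.keys f" using keys_SI by blast
        have "x = m" using xy(2) by (simp split: if_splits)
        have "length w = L" using hom w by blast
        then have "w \<noteq> []" using L by auto
        have "m + sm k w = sm d u" using xy \<open>x = m\<close> w by simp
        from core[OF this \<open>w \<noteq> []\<close>] False \<open>length w = L\<close> show False by auto
      qed
    qed
    then show ?thesis by (simp add: I_zero)
  qed
  from add.IH[OF qP] single show ?case by (simp add: distrib_right piP_add I_add)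
qed

lemma SI_hom0: "\<forall>w\<in>Poly_Mapping.keys f. length w = 0 \<Longrightarrow> SI k f = SI d f"
proof (induction f rule: pm_induct)
  case zero then show ?case by simp
next
  case (add q a c) then show ?case by (auto simp: keys_single_add SI_add SI_single)
qed

lemma U1h_zero:
  assumes f: "f \<in> I" and hom: "\<forall>w\<in>Poly_Mapping.keys f. length w = 0" and q: "q \<in> Pc n"
  shows "piP d (q * SI k f) \<in> I"
proof -
  have "piP d (q * SI k f) = ncmul f (piP d q)"
    using SI_hom0[OF hom, of k d] piP_mult_SI_hom[of f d d q] hom by simp
  also have "\<dots> = ncmul (Poly_Mapping.single [] 1) (ncmul f (piP d q))" by (simp add: ncmul_one_left)
  finally show ?thesis using I_ideal[OF f, of "Poly_Mapping.single [] 1" "piP d q"] piP_Pc[OF q]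
    by (simp add: ncF_single)
qed

lemma U1:
  assumes f: "f \<in> I" and q: "q \<in> Pc n"
  shows "piP d (q * SI k f) \<in> I"
proof -
  define N where "N = Max (insert 0 (length ` Poly_Mapping.keys f))"
  have "\<forall>w\<in>Poly_Mapping.keys f. length w \<le> N" unfolding N_def by (auto intro: Max_ge)
  then have "f = (\<Sum>L\<in>{..N}. hcF L f)" using lookup_hcF_sum by metis
  then have "piP d (q * SI k f) = (\<Sum>L\<in>{..N}. piP d (q * SI k (hcF L f)))"
    by (metis SI_sum piP_sum sum_distrib_left)
  also have "\<dots> \<in> I"
  proof (rule I_sum)
    fix L
    have hf: "hcF L f \<in> I" using I_hcF[OF f] .
    have hom: "\<forall>w\<in>Poly_Mapping.keys (hcF L f). length w = L" by (simp add: keys_hcF)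
    show "piP d (q * SI k (hcF L f)) \<in> I"
    proof (cases "L = 0")
      case True then show ?thesis using U1h_zero[OF hf _ q] hom by simp
    next
      case False then show ?thesis using U1h_pos[OF hf hom _ q] by simp
    qed
  qed
  finally show ?thesis .
qed

lemma piP_vv_zero:
  "piP d ((q::'k cpoly) * (var i j * var k j)) = 0"
proof (rule poly_mapping_eqI)
  fix u
  show "Poly_Mapping.lookup (piP d (q * (var i j * var k j))) u = Poly_Mapping.lookup 0 u"
  proof (rule ccontr)
    assume "Poly_Mapping.lookup (piP d (q * (var i j * var k j))) u \<noteq> Poly_Mapping.lookup 0 u"
    then have "sm d u \<in> Poly_Mapping.keys (q * (var i j * var k j))"
      by (simp add: lookup_piP in_keys_iff)
    from subsetD[OF keys_mult[of q "var i j * var k j"] this]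
    obtain x y where xy: "sm d u = x + y" "y \<in> Poly_Mapping.keys (var i j * var k j :: 'k cpoly)"
      by blast
    then have y: "y = Poly_Mapping.single (i, j) 1 + Poly_Mapping.single (k, j) 1"
      by (simp only: var_mult keys_single) (simp split: if_splits)
    have li: "Poly_Mapping.lookup (sm d u) (i, j) \<ge> 1 + (if i = k then 1 else 0)"
      unfolding xy y by (simp add: lookup_add lookup_single when_def)
    have lk: "Poly_Mapping.lookup (sm d u) (k, j) \<ge> 1"
      unfolding xy y by (simp add: lookup_add lookup_single when_def)
    show False
    proof (cases "i = k")
      case True then show False using li by (simp add: lookup_sm split: if_splits)
    next
      case False then show False using li lk by (simp add: lookup_sm split: if_splits)
    qed
  qed
qed

lemma JP_piP:
  assumes a: "a \<in> JP n I"
  shows "q \<in> Pc n \<Longrightarrow> piP d (q * a) \<in> I"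
proof -
  define G where "G = ({var i j * var k j | i k j. i < n \<and> k < n \<and> 1 \<le> j} \<union> (\<Union>k. (sigma ^^ k) ` iota ` I))"
  have "a \<in> cideal n G" using a unfolding JP_def G_def .
  then have "\<forall>q\<in>Pc n. \<forall>d. piP d (q * a) \<in> I"
  proof (induction rule: cideal.induct)
    case cideal_zero then show ?case by (simp add: I_zero)
  next
    case (cideal_gen g)
    then consider (vv) i k j where "g = var i j * var k j"
        | (si) k f where "g = (sigma ^^ k) (iota f)" "f \<in> I"
      unfolding G_def by blast
    then show ?case
    proof cases
      case vv then show ?thesis by (simp add: piP_vv_zero I_zero)
    next
      case si then show ?thesis by (simp add: sigma_pow_iota U1)
    qed
  next
    case (cideal_add a b) then show ?case by (simp add: distrib_left piP_add I_add)
  next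
    case (cideal_mul p a)
    show ?case
    proof (intro ballI allI)
      fix q :: "'k cpoly" and d assume "q \<in> Pc n"
      then have "q * p \<in> Pc n" using cideal_mul Pc_mult by blast
      then show "piP d (q * (p * a)) \<in> I" using cideal_mul by (simp add: mult.assoc[symmetric])
    qed
  qed
  then show "q \<in> Pc n \<Longrightarrow> piP d (q * a) \<in> I" by blast
qed

end




lemma mdeg_card: "(\<forall>v\<in>Poly_Mapping.keys m. Poly_Mapping.lookup m v = 1) \<Longrightarrow> mdeg m = card (Poly_Mapping.keys m)"
  unfolding mdeg_def by simp

lemma mono_JP:
  assumes mc: "Poly_Mapping.keys m \<subseteq> cvars n"
    and col: "\<forall>v\<in>Poly_Mapping.keys m. d < snd v \<and> snd v \<le> D"
    and deg: "mdeg m = D - d"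
    and nsm: "\<forall>u. m \<noteq> sm d u"
  shows "Poly_Mapping.single m c \<in> JP n I"
proof -
  have varJP: "v \<in> Poly_Mapping.keys m \<Longrightarrow> v' \<in> Poly_Mapping.keys m \<Longrightarrow> snd v = snd v' \<Longrightarrow>
      var (fst v) (snd v) * var (fst v') (snd v') \<in> JP n I" for v v'
  proof -
    assume a: "v \<in> Poly_Mapping.keys m" "v' \<in> Poly_Mapping.keys m" "snd v = snd v'"
    have "fst v < n" "fst v' < n" "1 \<le> snd v" using mc a by (auto simp: cvars_def case_prod_beta)
    then show ?thesis using JP_vv[of "fst v" n "fst v'" "snd v" I] a(3) by simp
  qed
  have keysm': "Poly_Mapping.keys (m - m2) \<subseteq> cvars n" for m2
    using mc by (auto simp: in_keys_iff lookup_minus)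
  consider (two) v where "v \<in> Poly_Mapping.keys m" "Poly_Mapping.lookup m v \<ge> 2"
    | (col2) v v' where "v \<in> Poly_Mapping.keys m" "v' \<in> Poly_Mapping.keys m" "v \<noteq> v'" "snd v = snd v'"
    | (good) "\<forall>v\<in>Poly_Mapping.keys m. Poly_Mapping.lookup m v = 1"
         "\<forall>v\<in>Poly_Mapping.keys m. \<forall>v'\<in>Poly_Mapping.keys m. snd v = snd v' \<longrightarrow> v = v'"
    by (metis One_nat_def in_keys_iff less_2_cases not_le)
  then show ?thesis
  proof cases
    case two
    define m' where "m' = m - (Poly_Mapping.single v 1 + Poly_Mapping.single v 1)"
    have "m = m' + (Poly_Mapping.single v 1 + Poly_Mapping.single v 1)"
      using two(2) unfolding m'_def
      by (intro poly_mapping_eqI) (auto simp: lookup_add lookup_minus lookup_single when_def)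
    then have "Poly_Mapping.single m c = Poly_Mapping.single m' c * (var (fst v) (snd v) * var (fst v) (snd v))"
      by (simp add: var_mult mult_single)
    also have "\<dots> \<in> JP n I"
      unfolding m'_def by (rule JP_mul[OF Pc_single[OF keysm'] varJP[OF two(1) two(1) refl]])
    finally show ?thesis .
  next
    case col2
    define m' where "m' = m - (Poly_Mapping.single v 1 + Poly_Mapping.single v' 1)"
    have l1: "Poly_Mapping.lookup m v \<ge> 1" "Poly_Mapping.lookup m v' \<ge> 1" using col2 by (auto simp: in_keys_iff)
    have "m = m' + (Poly_Mapping.single v 1 + Poly_Mapping.single v' 1)"
      using l1 col2(3) unfolding m'_def
      by (intro poly_mapping_eqI) (auto simp: lookup_add lookup_minus lookup_single when_def)
    then have "Poly_Mapping.single m c = Poly_Mapping.single m' c * (var (fst v) (snd v) * var (fst v') (snd v'))"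
      using col2(4) by (simp add: var_mult mult_single) (metis col2(4) prod.collapse)
    also have "\<dots> \<in> JP n I"
      unfolding m'_def by (rule JP_mul[OF Pc_single[OF keysm'] varJP[OF col2(1,2,4)]])
    finally show ?thesis .
  next
    case good
    have fin: "finite (Poly_Mapping.keys m)" by simp
    have card: "card (Poly_Mapping.keys m) = D - d" using deg mdeg_card[OF good(1)] by simp
    have inj: "inj_on snd (Poly_Mapping.keys m)" using good(2) by (auto intro: inj_onI)
    have sub: "snd ` Poly_Mapping.keys m \<subseteq> {d<..D}" using col by auto
    have "card (snd ` Poly_Mapping.keys m) = card {d<..D}" using card card_image[OF inj] by simp
    then have img: "snd ` Poly_Mapping.keys m = {d<..D}" using sub by (intro card_subset_eq) auto
    define u where "u = map (\<lambda>j. fst (THE v. v \<in> Poly_Mapping.keys m \<and> snd v = d + j + 1)) [0..<D - d]"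
    have u_nth: "u ! (j - d - 1) = fst (THE v. v \<in> Poly_Mapping.keys m \<and> snd v = j)" if "d < j" "j \<le> D" for j
    proof -
      have "j - d - 1 < D - d" "d + (j - d - 1) + 1 = j" using that by auto
      then show ?thesis unfolding u_def by simp
    qed
    have the: "(THE v. v \<in> Poly_Mapping.keys m \<and> snd v = snd v0) = v0" if "v0 \<in> Poly_Mapping.keys m" for v0
      using that good(2) by (intro the_equality) auto
    have "m = sm d u"
    proof (rule poly_mapping_eqI)
      fix x :: "nat \<times> nat"
      obtain a j where x: "x = (a, j)" by (cases x)
      show "Poly_Mapping.lookup m x = Poly_Mapping.lookup (sm d u) x"
      proof (cases "x \<in> Poly_Mapping.keys m")
        case True
        then have j: "d < j" "j \<le> D" using col x by auto
        have "u ! (j - d - 1) = a"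
          using u_nth[OF j] the[OF True] unfolding x by simp
        then show ?thesis using True good(1) j unfolding x by (simp add: lookup_sm u_def)
      next
        case False
        then have l0: "Poly_Mapping.lookup m x = 0" by (simp add: in_keys_iff)
        show ?thesis
        proof (cases "d < j \<and> j \<le> D")
          case True
          then have "j \<in> snd ` Poly_Mapping.keys m" using img by auto
          then obtain v where v: "v \<in> Poly_Mapping.keys m" "snd v = j" by auto
          have "u ! (j - d - 1) = fst v"
            using True u_nth[of j] the[OF v(1)] v(2) by simp
          moreover have "fst v \<noteq> a" using v False x by (metis prod.collapse)
          ultimately show ?thesis using l0 unfolding x by (simp add: lookup_sm)
        next
          case False
          then show ?thesis using l0 unfolding x by (auto simp: lookup_sm u_def)
        qed
      qed
    qed
    then show ?thesis using nsm by blast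
  qed
qed

lemma pigeon_poly:
  "p \<in> Pc n \<Longrightarrow> (\<forall>m\<in>Poly_Mapping.keys p. (\<forall>v\<in>Poly_Mapping.keys m. d < snd v \<and> snd v \<le> D) \<and> mdeg m = D - d)
   \<Longrightarrow> p - SI d (piP d p) \<in> JP n I"
proof (induction p rule: pm_induct)
  case zero then show ?case by (simp add: JP_zero)
next
  case (add q m c)
  have keys: "Poly_Mapping.keys (Poly_Mapping.single m c + q) = insert m (Poly_Mapping.keys q)"
    using add by (simp add: keys_single_add)
  then have qP: "q \<in> Pc n" and mP: "Poly_Mapping.keys m \<subseteq> cvars n" using add.prems unfolding Pc_def by auto
  have hq: "\<forall>m\<in>Poly_Mapping.keys q. (\<forall>v\<in>Poly_Mapping.keys m. d < snd v \<and> snd v \<le> D) \<and> mdeg m = D - d"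
    using add.prems keys by auto
  have hm: "(\<forall>v\<in>Poly_Mapping.keys m. d < snd v \<and> snd v \<le> D) \<and> mdeg m = D - d"
    using add.prems keys by auto
  have s: "Poly_Mapping.single m c - SI d (piP d (Poly_Mapping.single m c)) \<in> JP n I"
  proof (cases "\<exists>u. m = sm d u")
    case True
    then obtain u where "m = sm d u" by blast
    then show ?thesis by (simp add: piP_single_sm SI_single JP_zero)
  next
    case False
    then show ?thesis using mono_JP[OF mP _ _, of d D c I] hm by (simp add: piP_single_nsm)
  qed
  have eq: "Poly_Mapping.single m c + q - SI d (piP d (Poly_Mapping.single m c + q)) =
     (Poly_Mapping.single m c - SI d (piP d (Poly_Mapping.single m c))) + (q - SI d (piP d q))"
    by (simp add: piP_add SI_add)
  show ?case by (subst eq) (rule JP_add[OF s add.IH[OF qP hq]])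
qed




lemma iotaM_SI: "iotaM \<delta> x = (\<lambda>i. SI (\<delta> i) (x i))"
  by (simp add: iotaM_def sigma_pow_iota)

lemma hcFM_keys: "w \<in> Poly_Mapping.keys (hcFM \<delta> s x i) \<Longrightarrow> length w + \<delta> i = s"
  by (auto simp: hcFM_def keys_hcF split: if_splits)

lemma lookup_hcFM: "Poly_Mapping.lookup (hcFM \<delta> s x i) w = (if \<delta> i + length w = s then Poly_Mapping.lookup (x i) w else 0)"
  by (auto simp: hcFM_def lookup_hcF)

lemma hcFM_zero: "x i = 0 \<Longrightarrow> hcFM \<delta> s x i = 0"
  by (simp add: hcFM_def)

lemma hcFM_decomp:
  assumes x0: "\<forall>i\<ge>r. x i = 0"
  shows "\<exists>S. \<forall>i. x i = (\<Sum>s\<in>{..S}. hcFM \<delta> s x i)"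
proof -
  define T where "T = (\<Union>i\<in>{..<r}. (\<lambda>w. \<delta> i + length w) ` Poly_Mapping.keys (x i))"
  have finT: "finite T" unfolding T_def by auto
  define S where "S = Max (insert 0 T)"
  have bound: "i < r \<Longrightarrow> w \<in> Poly_Mapping.keys (x i) \<Longrightarrow> \<delta> i + length w \<le> S" for i w
    unfolding S_def T_def using finT T_def by (intro Max_ge) auto
  have "x i = (\<Sum>s\<in>{..S}. hcFM \<delta> s x i)" for i
  proof (cases "i < r")
    case False
    then show ?thesis using x0 by (simp add: hcFM_zero)
  next
    case True
    show ?thesis
    proof (rule poly_mapping_eqI)
      fix w
      have "Poly_Mapping.lookup (\<Sum>s\<in>{..S}. hcFM \<delta> s x i) w =
          (\<Sum>s\<in>{..S}. if s = \<delta> i + length w then Poly_Mapping.lookup (x i) w else 0)"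
        unfolding lookup_sum by (rule sum.cong) (auto simp: lookup_hcFM)
      also have "\<dots> = Poly_Mapping.lookup (x i) w"
        using bound[OF True, of w] by (subst sum.delta) (auto simp: in_keys_iff)
      finally show "Poly_Mapping.lookup (x i) w = Poly_Mapping.lookup (\<Sum>s\<in>{..S}. hcFM \<delta> s x i) w" by simp
    qed
  qed
  then show ?thesis by blast
qed

lemma iotaM_hcFM: "iotaM \<delta> (hcFM \<delta> s x) = hcPM \<delta> s (iotaM \<delta> x)"
  by (rule ext) (simp add: iotaM_SI hcFM_def hcPM_def hcP_SI)

lemma SI_ncmul_hcFM: "SI (\<delta> i) (ncmul (hcFM \<delta> s x i) g) = SI s g * SI (\<delta> i) (hcFM \<delta> s x i)"
proof (cases "\<delta> i \<le> s")
  case True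
  have "\<forall>w\<in>Poly_Mapping.keys (hcFM \<delta> s x i). length w = s - \<delta> i" using hcFM_keys by fastforce
  from SI_ncmul_hom[OF this, of "\<delta> i" g] True show ?thesis by (simp add: mult.commute)
next
  case False then show ?thesis by (simp add: hcFM_def)
qed

context
  fixes n :: nat and I :: "'k::field ncpoly set" and r :: nat and \<delta> :: "nat \<Rightarrow> nat"
  assumes gI: "graded_tsideal n I"
begin

lemma zero_Ifree: "(\<lambda>i. 0) \<in> Ifree r I"
  unfolding Ifree_def using I_zero[OF gI] by simp

lemma zero_Jfree: "(\<lambda>i. 0) \<in> Jfree n I r"
  unfolding Jfree_def by (simp add: JP_zero)

lemma M_sum:
  assumes gM: "graded_right_submodule n I r \<delta> M"
  shows "(\<And>a. a \<in> A \<Longrightarrow> F a \<in> M) \<Longrightarrow> (\<lambda>i. \<Sum>a\<in>A. F a i) \<in> M"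
proof (induction A rule: infinite_finite_induct)
  case (infinite A) then show ?case using gM zero_Ifree unfolding graded_right_submodule_def by auto
next
  case empty then show ?case using gM zero_Ifree unfolding graded_right_submodule_def by auto
next
  case (insert a A)
  have addc: "\<forall>x\<in>M. \<forall>y\<in>M. (\<lambda>i. x i + y i) \<in> M" using gM unfolding graded_right_submodule_def by blast
  have f1: "F a \<in> M" using insert.prems by blast
  have f2: "(\<lambda>i. \<Sum>a\<in>A. F a i) \<in> M" using insert.IH insert.prems by blast
  have "(\<lambda>i. F a i + (\<Sum>a\<in>A. F a i)) \<in> M" using addc[rule_format, OF f1 f2] by simp
  then show ?case using insert by simp
qed

lemma M'_sum:
  assumes gS: "graded_S_submodule n I r \<delta> M'"
  shows "(\<And>a. a \<in> A \<Longrightarrow> F a \<in> M') \<Longrightarrow> (\<lambda>i. \<Sum>a\<in>A. F a i) \<in> M'"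
proof (induction A rule: infinite_finite_induct)
  case (infinite A) then show ?case using gS zero_Jfree unfolding graded_S_submodule_def by auto
next
  case empty then show ?case using gS zero_Jfree unfolding graded_S_submodule_def by auto
next
  case (insert a A)
  have addc: "\<forall>x\<in>M'. \<forall>y\<in>M'. (\<lambda>i. x i + y i) \<in> M'" using gS unfolding graded_S_submodule_def by blast
  have f1: "F a \<in> M'" using insert.prems by blast
  have f2: "(\<lambda>i. \<Sum>a\<in>A. F a i) \<in> M'" using insert.IH insert.prems by blast
  have "(\<lambda>i. F a i + (\<Sum>a\<in>A. F a i)) \<in> M'" using addc[rule_format, OF f1 f2] by simp
  then show ?case using insert by simp
qed

lemma U2:
  assumes gM: "graded_right_submodule n I r \<delta> M" and x: "x \<in> M" and q: "q \<in> Pc n"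
  shows "(\<lambda>i. if i < r then piP (\<delta> i) (q * iotaM \<delta> x i) else 0) \<in> M"
proof -
  have x0: "\<forall>i\<ge>r. x i = 0" using gM x unfolding graded_right_submodule_def ncfree_def by auto
  obtain S where S: "\<And>i. x i = (\<Sum>s\<in>{..S}. hcFM \<delta> s x i)" using hcFM_decomp[OF x0] by blast
  have eq: "(\<lambda>i. if i < r then piP (\<delta> i) (q * iotaM \<delta> x i) else 0) =
      (\<lambda>i. \<Sum>s\<in>{..S}. ncmul (hcFM \<delta> s x i) (piP s q))"
  proof (rule ext)
    fix i
    show "(if i < r then piP (\<delta> i) (q * iotaM \<delta> x i) else 0) = (\<Sum>s\<in>{..S}. ncmul (hcFM \<delta> s x i) (piP s q))"
    proof (cases "i < r")
      case True
      have "piP (\<delta> i) (q * iotaM \<delta> x i) = piP (\<delta> i) (q * SI (\<delta> i) (\<Sum>s\<in>{..S}. hcFM \<delta> s x i))"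
        unfolding iotaM_SI using S[of i] by simp
      also have "\<dots> = (\<Sum>s\<in>{..S}. piP (\<delta> i) (q * SI (\<delta> i) (hcFM \<delta> s x i)))"
        by (simp add: SI_sum sum_distrib_left piP_sum)
      also have "\<dots> = (\<Sum>s\<in>{..S}. ncmul (hcFM \<delta> s x i) (piP s q))"
        by (rule sum.cong[OF refl], rule piP_mult_SI_hom) (use hcFM_keys in blast)
      finally show ?thesis using True by simp
    next
      case False then show ?thesis using x0 by (simp add: hcFM_zero)
    qed
  qed
  show ?thesis unfolding eq
  proof (rule M_sum[OF gM])
    fix s
    have "hcFM \<delta> s x \<in> M" using gM x unfolding graded_right_submodule_def by blast
    moreover have "piP s q \<in> ncF n" using piP_Pc[OF q] .
    ultimately show "(\<lambda>i. ncmul (hcFM \<delta> s x i) (piP s q)) \<in> M"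
      using gM unfolding graded_right_submodule_def by blast
  qed
qed

lemma UU:
  assumes gM: "graded_right_submodule n I r \<delta> M" and z: "z \<in> Lmod n I r \<delta> M"
  shows "\<forall>q\<in>Pc n. (\<lambda>i. if i < r then piP (\<delta> i) (q * z i) else 0) \<in> M"
  using z unfolding Lmod_def
proof (induction rule: cspan.induct)
  case cspan_zero
  have "(\<lambda>i. 0) \<in> M" using gM zero_Ifree unfolding graded_right_submodule_def by auto
  moreover have "(\<lambda>i. if i < r then piP (\<delta> i) (q * 0) else 0) = (\<lambda>i. 0)" for q :: "'k cpoly"
    by auto
  ultimately show ?case by simp
next
  case (cspan_gen x)
  then consider (io) y where "x = iotaM \<delta> y" "y \<in> M" | (jf) "x \<in> Jfree n I r" by blast
  then show ?case
  proof cases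
    case io then show ?thesis using U2[OF gM] by blast
  next
    case jf
    show ?thesis
    proof
      fix q :: "'k cpoly" assume q: "q \<in> Pc n"
      have "(\<lambda>i. if i < r then piP (\<delta> i) (q * x i) else 0) \<in> Ifree r I"
        using jf JP_piP[OF gI _ q] unfolding Ifree_def Jfree_def by auto
      then show "(\<lambda>i. if i < r then piP (\<delta> i) (q * x i) else 0) \<in> M"
        using gM unfolding graded_right_submodule_def by blast
    qed
  qed
next
  case (cspan_add x y)
  show ?case
  proof
    fix q :: "'k cpoly" assume q: "q \<in> Pc n"
    have "(\<lambda>i. (if i < r then piP (\<delta> i) (q * x i) else 0) + (if i < r then piP (\<delta> i) (q * y i) else 0)) \<in> M"
    proof -
      have addc: "\<forall>x\<in>M. \<forall>y\<in>M. (\<lambda>i. x i + y i) \<in> M" using gM unfolding graded_right_submodule_def by blast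
      have a1: "(\<lambda>i. if i < r then piP (\<delta> i) (q * x i) else 0) \<in> M" using cspan_add.IH(1) q by blast
      have a2: "(\<lambda>i. if i < r then piP (\<delta> i) (q * y i) else 0) \<in> M" using cspan_add.IH(2) q by blast
      show ?thesis using addc[rule_format, OF a1 a2] by simp
    qed
    moreover have "(\<lambda>i. (if i < r then piP (\<delta> i) (q * x i) else 0) + (if i < r then piP (\<delta> i) (q * y i) else 0)) =
        (\<lambda>i. if i < r then piP (\<delta> i) (q * (x i + y i)) else 0)"
      by (auto simp: distrib_left piP_add)
    ultimately show "(\<lambda>i. if i < r then piP (\<delta> i) (q * (\<lambda>i. x i + y i) i) else 0) \<in> M" by simp
  qed
next
  case (cspan_mul p x)
  show ?case
  proof
    fix q :: "'k cpoly" assume q: "q \<in> Pc n"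
    have "q * p \<in> Pc n" using Pc_mult q cspan_mul by blast
    then have "(\<lambda>i. if i < r then piP (\<delta> i) ((q * p) * x i) else 0) \<in> M" using cspan_mul by blast
    then show "(\<lambda>i. if i < r then piP (\<delta> i) (q * (\<lambda>i. p * x i) i) else 0) \<in> M"
      by (simp only: mult.assoc)
  qed
qed

lemma uniq_sub:
  assumes g1: "graded_right_submodule n I r \<delta> M1" and g2: "graded_right_submodule n I r \<delta> M2"
    and eq: "Lmod n I r \<delta> M1 = Lmod n I r \<delta> M2"
  shows "M1 \<subseteq> M2"
proof
  fix x assume x: "x \<in> M1"
  have x0: "\<forall>i\<ge>r. x i = 0" using g1 x unfolding graded_right_submodule_def ncfree_def by auto
  have "iotaM \<delta> x \<in> Lmod n I r \<delta> M1" unfolding Lmod_def using x by (blast intro: cspan_gen)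
  then have "iotaM \<delta> x \<in> Lmod n I r \<delta> M2" using eq by simp
  from UU[OF g2 this] Pc_one
  have "(\<lambda>i. if i < r then piP (\<delta> i) (1 * iotaM \<delta> x i) else 0) \<in> M2" by blast
  moreover have "(\<lambda>i. if i < r then piP (\<delta> i) (1 * iotaM \<delta> x i) else 0) = x"
    using x0 by (auto simp: iotaM_SI piP_SI)
  ultimately show "x \<in> M2" by simp
qed

end




context
  fixes n :: nat and I :: "'k::field ncpoly set" and r :: nat and \<delta> :: "nat \<Rightarrow> nat"
    and M' :: "(nat \<Rightarrow> 'k cpoly) set"
  assumes gI: "graded_tsideal n I"
    and gS: "graded_S_submodule n I r \<delta> M'"
begin

lemma M'_cfree: "z \<in> M' \<Longrightarrow> z \<in> cfree n r" using gS unfolding graded_S_submodule_def by blast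
lemma M'_Jfree: "z \<in> Jfree n I r \<Longrightarrow> z \<in> M'" using gS unfolding graded_S_submodule_def by blast
lemma M'_add: "x \<in> M' \<Longrightarrow> y \<in> M' \<Longrightarrow> (\<lambda>i. x i + y i) \<in> M'" using gS unfolding graded_S_submodule_def by blast
lemma M'_mul: "x \<in> M' \<Longrightarrow> p \<in> Pc n \<Longrightarrow> (\<lambda>i. p * x i) \<in> M'" using gS unfolding graded_S_submodule_def by blast
lemma M'_hc: "x \<in> M' \<Longrightarrow> hcPM \<delta> d x \<in> M'" using gS unfolding graded_S_submodule_def by blast

definition "Mex = {x \<in> ncfree n r. iotaM \<delta> x \<in> M'}"

lemma Mex_graded: "graded_right_submodule n I r \<delta> Mex"
  unfolding graded_right_submodule_def
proof (intro conjI ballI allI subsetI)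
  show "x \<in> ncfree n r" if "x \<in> Mex" for x using that unfolding Mex_def by blast
next
  fix x assume x: "x \<in> Ifree r I"
  have "x \<in> ncfree n r" using x I_ncF[OF gI] unfolding Ifree_def ncfree_def by auto
  moreover have "iotaM \<delta> x \<in> Jfree n I r"
    using x unfolding Ifree_def Jfree_def iotaM_SI by (auto intro: JP_SI)
  ultimately show "x \<in> Mex" unfolding Mex_def using M'_Jfree by blast
next
  fix x y assume x: "x \<in> Mex" and y: "y \<in> Mex"
  have "(\<lambda>i. x i + y i) \<in> ncfree n r" using x y unfolding Mex_def ncfree_def by (auto intro: ncF_add)
  moreover have "iotaM \<delta> (\<lambda>i. x i + y i) = (\<lambda>i. iotaM \<delta> x i + iotaM \<delta> y i)"
    by (simp add: iotaM_SI SI_add)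
  ultimately show "(\<lambda>i. x i + y i) \<in> Mex" using x y M'_add unfolding Mex_def by auto
next
  fix x and g :: "'k ncpoly" assume x: "x \<in> Mex" and g: "g \<in> ncF n"
  have xf: "x \<in> ncfree n r" and xM: "iotaM \<delta> x \<in> M'" using x unfolding Mex_def by auto
  have x0: "\<forall>i\<ge>r. x i = 0" using xf unfolding ncfree_def by auto
  obtain S where S: "\<And>i. x i = (\<Sum>s\<in>{..S}. hcFM \<delta> s x i)" using hcFM_decomp[OF x0] by blast
  have "(\<lambda>i. ncmul (x i) g) \<in> ncfree n r" using xf g unfolding ncfree_def by (auto intro: ncF_ncmul)
  moreover have "iotaM \<delta> (\<lambda>i. ncmul (x i) g) = (\<lambda>i. \<Sum>s\<in>{..S}. SI s g * iotaM \<delta> (hcFM \<delta> s x) i)"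
  proof (rule ext)
    fix i
    have "iotaM \<delta> (\<lambda>i. ncmul (x i) g) i = SI (\<delta> i) (ncmul (\<Sum>s\<in>{..S}. hcFM \<delta> s x i) g)"
      unfolding iotaM_SI using S[of i] by simp
    also have "\<dots> = (\<Sum>s\<in>{..S}. SI s g * iotaM \<delta> (hcFM \<delta> s x) i)"
      by (simp add: ncmul_sum_left SI_sum SI_ncmul_hcFM iotaM_SI)
    finally show "iotaM \<delta> (\<lambda>i. ncmul (x i) g) i = (\<Sum>s\<in>{..S}. SI s g * iotaM \<delta> (hcFM \<delta> s x) i)" .
  qed
  moreover have "(\<lambda>i. \<Sum>s\<in>{..S}. SI s g * iotaM \<delta> (hcFM \<delta> s x) i) \<in> M'"
  proof (rule M'_sum[OF gI gS])
    fix s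
    have "iotaM \<delta> (hcFM \<delta> s x) \<in> M'" unfolding iotaM_hcFM by (rule M'_hc[OF xM])
    then show "(\<lambda>i. SI s g * iotaM \<delta> (hcFM \<delta> s x) i) \<in> M'" using M'_mul SI_Pc[OF g] by blast
  qed
  ultimately show "(\<lambda>i. ncmul (x i) g) \<in> Mex" unfolding Mex_def by simp
next
  fix x d assume x: "x \<in> Mex"
  have xf: "x \<in> ncfree n r" and xM: "iotaM \<delta> x \<in> M'" using x unfolding Mex_def by auto
  have "hcFM \<delta> d x \<in> ncfree n r" using xf unfolding ncfree_def hcFM_def by (auto intro: ncF_hcF simp: ncF_def keys_hcF)
  moreover have "iotaM \<delta> (hcFM \<delta> d x) \<in> M'" unfolding iotaM_hcFM by (rule M'_hc[OF xM])
  ultimately show "hcFM \<delta> d x \<in> Mex" unfolding Mex_def by simp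
qed

lemma Lmod_sub: "Lmod n I r \<delta> Mex \<subseteq> M'"
proof
  fix z assume "z \<in> Lmod n I r \<delta> Mex"
  then show "z \<in> M'" unfolding Lmod_def
  proof (induction rule: cspan.induct)
    case cspan_zero then show ?case using M'_Jfree zero_Jfree[OF gI] by blast
  next
    case (cspan_gen x) then show ?case unfolding Mex_def using M'_Jfree by blast
  next
    case (cspan_add x y) then show ?case using M'_add by blast
  next
    case (cspan_mul p x) then show ?case using M'_mul by blast
  qed
qed

lemma Mdd_in_Lmod:
  assumes x: "x \<in> Mdd n I r \<delta> M' d"
  shows "x \<in> Lmod n I r \<delta> Mex"
proof -
  have xM: "x \<in> M'" and xS: "\<forall>i<r. x i \<in> Spre n I (\<delta> i) d" and xh: "\<forall>i<r. x i - hcPM \<delta> d x i \<in> JP n I"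
    using x unfolding Mdd_def by auto
  have x0: "\<forall>i\<ge>r. x i = 0" using M'_cfree[OF xM] unfolding cfree_def by auto
  define z where "z = hcPM \<delta> d x"
  have zM: "z \<in> M'" unfolding z_def by (rule M'_hc[OF xM])
  have zP: "\<forall>i<r. z i \<in> Pc n" using M'_cfree[OF zM] unfolding cfree_def by auto
  have z0: "\<forall>i\<ge>r. z i = 0" using x0 unfolding z_def hcPM_def by auto
  define y where "y = (\<lambda>i. if i < r then piP (\<delta> i) (z i) else 0)"
  have claim: "z i - SI (\<delta> i) (y i) \<in> JP n I" if i: "i < r" for i
  proof (cases "\<delta> i \<le> d")
    case False
    then show ?thesis unfolding y_def z_def hcPM_def by (simp add: JP_zero)
  next
    case True
    define e where "e = d - \<delta> i"
    from xS i obtain a q where aq: "x i = a + q" "a \<in> Pdd n (\<delta> i) d" "q \<in> JP n I"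
      unfolding Spre_def by blast
    have zi: "z i = hcP e (x i)" unfolding z_def hcPM_def e_def using True by simp
    define h where "h = hcP e a"
    have zh: "z i - h \<in> JP n I" unfolding zi h_def aq(1) hcP_add using JP_hcP[OF gI aq(3)] by simp
    have s1: "SI (\<delta> i) (piP (\<delta> i) (z i - h)) \<in> JP n I"
      using JP_SI JP_piP[OF gI zh Pc_one, of "\<delta> i"] by simp
    have aP: "a \<in> Pc n" using aq(2) unfolding Pdd_def by blast
    have s2: "h - SI (\<delta> i) (piP (\<delta> i) h) \<in> JP n I"
      unfolding h_def
    proof (rule pigeon_poly[OF Pc_hcP[OF aP]])
      show "\<forall>m\<in>Poly_Mapping.keys (hcP e a). (\<forall>v\<in>Poly_Mapping.keys m. \<delta> i < snd v \<and> snd v \<le> d) \<and> mdeg m = d - \<delta> i"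
        using aq(2) unfolding Pdd_def keys_hcP e_def by auto
    qed
    have eq: "z i - SI (\<delta> i) (y i) = (z i - h - SI (\<delta> i) (piP (\<delta> i) (z i - h))) + (h - SI (\<delta> i) (piP (\<delta> i) h))"
      unfolding y_def using i by (simp add: piP_diff SI_diff)
    show ?thesis by (subst eq) (rule JP_add[OF JP_diff[OF zh s1] s2])
  qed
  define w where "w = (\<lambda>i. z i - iotaM \<delta> y i)"
  have wJ: "w \<in> Jfree n I r" unfolding Jfree_def w_def iotaM_SI using claim z0 by (auto simp: y_def)
  have wJ': "(\<lambda>i. - w i) \<in> Jfree n I r" using wJ unfolding Jfree_def by (auto intro: JP_uminus)
  have "(\<lambda>i. z i + - w i) \<in> M'" using M'_add[OF zM M'_Jfree[OF wJ']] .
  moreover have "(\<lambda>i. z i + - w i) = iotaM \<delta> y" unfolding w_def by auto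
  ultimately have yM': "iotaM \<delta> y \<in> M'" by simp
  have yf: "y \<in> ncfree n r" unfolding y_def ncfree_def using zP by (auto intro: piP_Pc)
  have yM: "y \<in> Mex" unfolding Mex_def using yM' yf by blast
  define v where "v = (\<lambda>i. x i - z i)"
  have vJ: "v \<in> Jfree n I r" unfolding Jfree_def v_def using xh x0 z0 unfolding z_def by auto
  have g1: "iotaM \<delta> y \<in> Lmod n I r \<delta> Mex" unfolding Lmod_def using yM by (blast intro: cspan_gen)
  have g2: "w \<in> Lmod n I r \<delta> Mex" unfolding Lmod_def using wJ by (blast intro: cspan_gen)
  have g3: "v \<in> Lmod n I r \<delta> Mex" unfolding Lmod_def using vJ by (blast intro: cspan_gen)
  have "(\<lambda>i. (\<lambda>i. iotaM \<delta> y i + w i) i + v i) \<in> Lmod n I r \<delta> Mex"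
    unfolding Lmod_def by (intro cspan_add g1[unfolded Lmod_def] g2[unfolded Lmod_def] g3[unfolded Lmod_def])
  moreover have "(\<lambda>i. (\<lambda>i. iotaM \<delta> y i + w i) i + v i) = x" unfolding w_def v_def by auto
  ultimately show ?thesis by simp
qed

end

theorem mainTheorem9:
  fixes n r :: nat and \<delta> :: "nat \<Rightarrow> nat" and I :: "'k::field ncpoly set"
    and M' :: "(nat \<Rightarrow> 'k cpoly) set"
  assumes "graded_tsideal n I"
    and "graded_S_submodule n I r \<delta> M'"
    and "M' = cspan n ((\<Union>d. Mdd n I r \<delta> M' d) \<union> Jfree n I r)"
  shows "\<exists>!M. graded_right_submodule n I r \<delta> M \<and> M' = Lmod n I r \<delta> M"
proof (rule ex1I)
  let ?M = "Mex n r \<delta> M'"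
  have sub: "M' \<subseteq> Lmod n I r \<delta> ?M"
  proof
    fix z assume "z \<in> M'"
    then have "z \<in> cspan n ((\<Union>d. Mdd n I r \<delta> M' d) \<union> Jfree n I r)" using assms(3) by blast
    then show "z \<in> Lmod n I r \<delta> ?M"
    proof (induction rule: cspan.induct)
      case cspan_zero then show ?case unfolding Lmod_def by (rule cspan.cspan_zero)
    next
      case (cspan_gen x)
      then show ?case
      proof
        assume "x \<in> (\<Union>d. Mdd n I r \<delta> M' d)"
        then show ?thesis using Mdd_in_Lmod[OF assms(1,2)] by blast
      next
        assume "x \<in> Jfree n I r"
        then show ?thesis unfolding Lmod_def by (blast intro: cspan.cspan_gen)
      qed
    next
      case (cspan_add x y) show ?case using cspan_add.IH unfolding Lmod_def by (rule cspan.cspan_add)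
    next
      case (cspan_mul p x) show ?case using cspan_mul.hyps(1) cspan_mul.IH unfolding Lmod_def by (rule cspan.cspan_mul)
    qed
  qed
  show "graded_right_submodule n I r \<delta> ?M \<and> M' = Lmod n I r \<delta> ?M"
    using Mex_graded[OF assms(1,2)] sub Lmod_sub[OF assms(1,2)] by blast
  fix M assume M: "graded_right_submodule n I r \<delta> M \<and> M' = Lmod n I r \<delta> M"
  have g2: "graded_right_submodule n I r \<delta> ?M" "M' = Lmod n I r \<delta> ?M"
    using Mex_graded[OF assms(1,2)] sub Lmod_sub[OF assms(1,2)] by blast+
  show "M = ?M"
    using uniq_sub[OF assms(1) conjunct1[OF M] g2(1)] uniq_sub[OF assms(1) g2(1) conjunct1[OF M]]
      M g2(2) by auto
qed


end
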